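(* Let $i\ge 2$ be an integer and $k=2^i-1$. Let $k^-$ denote the least positive integer congruent to $-k$ modulo $i$. Then $$a_k\le 2^{k+k^-}+2^k-2^{k-i}-1.$$ If moreover $k=2^i-1$ is prime, then equality holds, i.e. $a_k=2^{k+i-1}+2^k-2^{k-i}-1$ (here $k^-=i-1$). Consequently, if there are infinitely many Mersenne primes, then $c_k/2^k\to 1/2$ as $k\to\infty$ through Mersenne primes.
   Context: For a positive integer $k$, $a_k$ is the smallest positive multiple of $k$ whose sum of binary digits equals $k$, and $c_k=a_k/k$. *)

theory Defs
  imports Complex_Main "HOL-Computational_Algebra.Primes" "HOL-Number_Theory.Cong"
begin

fun bin_digit_sum :: "nat \<Rightarrow> nat" where
  "bin_digit_sum n = (if n = 0 then 0 else n mod 2 + bin_digit_sum (n div 2))"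

definition a_seq :: "nat \<Rightarrow> nat" where
  "a_seq k = (LEAST m. 0 < m \<and> k dvd m \<and> bin_digit_sum m = k)"

definition c_seq :: "nat \<Rightarrow> real" where
  "c_seq k = real (a_seq k) / real k"

definition kminus :: "nat \<Rightarrow> nat \<Rightarrow> nat" where
  "kminus i k = (LEAST m::nat. 0 < m \<and> [int m = - int k] (mod int i))"

definition mersenne_primes :: "nat set" where
  "mersenne_primes = {k. prime k \<and> (\<exists>i\<ge>2. k = 2 ^ i - 1)}"

end

theory Submission
  imports Defs "HOL-Number_Theory.Number_Theory"
begin


lemma bds_0[simp]: "bin_digit_sum 0 = 0" by simp
declare bin_digit_sum.simps[simp del]

lemma bds_double: "bin_digit_sum (2*n) = bin_digit_sum n"
  by (cases "n = 0") (auto simp: bin_digit_sum.simps[of "2*n"])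
lemma bds_double1: "bin_digit_sum (2*n+1) = Suc (bin_digit_sum n)"
  by (subst bin_digit_sum.simps) simp
lemma bds_1[simp]: "bin_digit_sum 1 = 1"
  using bds_double1[of 0] by simp
lemma bds_Suc0[simp]: "bin_digit_sum (Suc 0) = Suc 0"
  using bds_double1[of 0] by simp

lemma bds_split: "bin_digit_sum n = n mod 2 + bin_digit_sum (n div 2)"
proof -
  have "n = 2*(n div 2) + n mod 2" by simp
  moreover have "n mod 2 = 0 \<or> n mod 2 = 1" by auto
  ultimately show ?thesis using bds_double[of "n div 2"] bds_double1[of "n div 2"]
    by (metis add.commute add.right_neutral plus_1_eq_Suc)
qed

lemma bds_2mr: "r < 2 \<Longrightarrow> bin_digit_sum (2*m + r) = r + bin_digit_sum m"
  using bds_double[of m] bds_double1[of m] by (cases r) auto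

lemma bds_shift: "b < 2^j \<Longrightarrow> bin_digit_sum (a*2^j + b) = bin_digit_sum a + bin_digit_sum b"
proof (induction j arbitrary: b)
  case 0 then show ?case by simp
next
  case (Suc j)
  have b: "b div 2 < 2^j" using Suc.prems by auto
  have e: "a*2^Suc j + b = 2*(a*2^j + b div 2) + b mod 2" by simp
  have "bin_digit_sum (a*2^Suc j + b) = b mod 2 + bin_digit_sum (a*2^j + b div 2)"
    unfolding e by (rule bds_2mr) simp
  also have "\<dots> = b mod 2 + bin_digit_sum a + bin_digit_sum (b div 2)" using Suc.IH[OF b] by simp
  also have "\<dots> = bin_digit_sum a + bin_digit_sum b" using bds_split[of b] by simp
  finally show ?case .
qed

lemma bds_pow2: "bin_digit_sum (2^j) = 1"
  by (induction j) (auto simp: bds_double)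

lemma bds_mask: "bin_digit_sum (2^n - 1) = n"
proof (induction n)
  case 0 then show ?case by simp
next
  case (Suc n)
  have h: "(2::nat)^n \<ge> 1" by simp
  have "(2::nat)^Suc n - 1 = 2*(2^n - 1) + 1" using h by (simp only: power_Suc)
  then show ?case using Suc bds_double1 by simp
qed

lemma bds_compl: "y < 2^n \<Longrightarrow> bin_digit_sum y \<le> n \<and> bin_digit_sum (2^n - 1 - y) = n - bin_digit_sum y"
proof (induction n arbitrary: y)
  case 0 then show ?case by simp
next
  case (Suc n)
  have y': "y div 2 < 2^n" using Suc.prems by auto
  note IH = Suc.IH[OF y']
  have yy: "y = 2*(y div 2) + y mod 2" by simp
  have e: "(2::nat)^Suc n - 1 - y = 2*(2^n - 1 - y div 2) + (1 - y mod 2)"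
    using y' by (subst yy) (auto simp: algebra_simps)
  have h1: "bin_digit_sum (2^Suc n - 1 - y) = (1 - y mod 2) + bin_digit_sum (2^n - 1 - y div 2)"
    unfolding e by (rule bds_2mr) simp
  have h2: "bin_digit_sum y = y mod 2 + bin_digit_sum (y div 2)" by (rule bds_split)
  show ?case
  proof (cases "y mod 2 = 0")
    case True
    then show ?thesis using h1 h2 IH by (simp add: Suc_diff_le)
  next
    case False
    then have "y mod 2 = 1" by presburger
    then show ?thesis using h1 h2 IH by simp
  qed
qed

lemma bds_add: "bin_digit_sum (a+b) \<le> bin_digit_sum a + bin_digit_sum b"
proof (induction "a+b" arbitrary: a b rule: less_induct)
  case less
  show ?case
  proof (cases "a + b = 0")
    case True then show ?thesis by simp
  next
    case False
    define a' where "a' = a div 2"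
    define b' where "b' = b div 2"
    define ra where "ra = a mod 2"
    define rb where "rb = b mod 2"
    have ae: "a = 2*a' + ra" and be: "b = 2*b' + rb" unfolding a'_def b'_def ra_def rb_def by simp_all
    have r: "ra < 2" "rb < 2" unfolding ra_def rb_def by simp_all
    have sa: "bin_digit_sum a = ra + bin_digit_sum a'" using ae r bds_2mr by simp
    have sb: "bin_digit_sum b = rb + bin_digit_sum b'" using be r bds_2mr by simp
    have lt1: "a' + b' < a + b" using ae be False by auto
    have IH1: "bin_digit_sum (a'+b') \<le> bin_digit_sum a' + bin_digit_sum b'" using less lt1 by blast
    show ?thesis
    proof (cases "ra + rb < 2")
      case True
      have "a + b = 2*(a'+b') + (ra+rb)" using ae be by simp
      then have "bin_digit_sum (a+b) = ra + rb + bin_digit_sum (a'+b')" using bds_2mr[OF True, of "a'+b'"] by metis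
      then show ?thesis using sa sb IH1 by simp
    next
      case F: False
      then have rr: "ra = 1" "rb = 1" using r by auto
      have "a + b = 2*((a'+b') + 1) + 0" using ae be rr by simp
      then have e: "bin_digit_sum (a+b) = bin_digit_sum ((a'+b') + 1)" using bds_double[of "a'+b'+1"] by (metis add.right_neutral)
      have lt2: "(a'+b') + 1 < a + b" using ae be rr by simp
      have "bin_digit_sum ((a'+b') + 1) \<le> bin_digit_sum (a'+b') + bin_digit_sum 1"
        using less lt2 by blast
      then show ?thesis using e sa sb IH1 rr by simp
    qed
  qed
qed

lemma bds_mult_M:
  assumes "0 < x" "(2^i - 1) dvd x" "1 \<le> i"
  shows "i \<le> bin_digit_sum x"
  using assms
proof (induction x rule: less_induct)
  case (less x)
  show ?case
  proof (cases "x < 2^i")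
    case True
    obtain c where c: "x = (2^i - 1) * c" using less.prems by auto
    have "c \<noteq> 0" using c less.prems by auto
    moreover have "c < 2" 
    proof (rule ccontr)
      assume "\<not> c < 2"
      then have "(2^i - 1) * 2 \<le> x" using c by auto
      moreover have "(2::nat)^i \<ge> 2" using less.prems(3)
        by (metis power_increasing power_one_right  zero_less_numeral one_le_numeral)
      ultimately show False using True by linarith
    qed
    ultimately have "x = 2^i - 1" using c by auto
    then show ?thesis using bds_mask by simp
  next
    case False
    define q where "q = x div 2^i"
    define l where "l = x mod 2^i"
    have xe: "x = q * 2^i + l" unfolding q_def l_def by (metis div_mult_mod_eq)
    have lt: "l < 2^i" unfolding l_def by simp
    have q0: "q > 0" using False unfolding q_def by (simp add: div_greater_zero_iff)
    have p: "(2::nat)^i \<ge> 2" using less.prems(3)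
        by (metis power_increasing power_one_right  zero_less_numeral one_le_numeral)
    have xe2: "x = (q + l) + q * (2^i - 1)" using xe p by (simp add: algebra_simps)
    have d: "(2^i - 1) dvd (q + l)" using less.prems(2) xe2
      by (metis dvd_add_right_iff dvd_triv_right add.commute)
    have "q + l < x" using xe2 q0 p by auto
    then have "i \<le> bin_digit_sum (q + l)" using less.IH d q0 less.prems(3) by auto
    also have "\<dots> \<le> bin_digit_sum q + bin_digit_sum l" by (rule bds_add)
    also have "\<dots> = bin_digit_sum x" using bds_shift[OF lt, of q] xe by simp
    finally show ?thesis .
  qed
qed


lemma bds_zero_iff: "bin_digit_sum n = 0 \<Longrightarrow> n = 0"
proof (induction n rule: less_induct)
  case (less n)
  show ?case
  proof (rule ccontr)
    assume "n \<noteq> 0"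
    then have "n div 2 < n" by simp
    moreover have s: "n mod 2 + bin_digit_sum (n div 2) = 0" using bds_split[of n] less.prems by simp
    ultimately have "n div 2 = 0" using less.IH by simp
    moreover have "n mod 2 = 0" using s by simp
    moreover have "n = 2 * (n div 2) + n mod 2" by simp
    ultimately show False using \<open>n \<noteq> 0\<close> by simp
  qed
qed

lemma bds_one_pow: "bin_digit_sum l = 1 \<Longrightarrow> \<exists>p. l = 2^p"
proof (induction l rule: less_induct)
  case (less l)
  define l' where "l' = l div 2"
  define r where "r = l mod 2"
  have le: "l = 2*l' + r" unfolding l'_def r_def by simp
  have r2: "r < 2" unfolding r_def by simp
  have sp: "bin_digit_sum l = r + bin_digit_sum l'" using le r2 bds_2mr by simp
  have l0: "l \<noteq> 0" proof
    assume "l = 0" then show False using less.prems by simp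
  qed
  show ?case
  proof (cases "r = 0")
    case True
    then have "bin_digit_sum l' = 1" using sp less.prems by simp
    moreover have "l' < l" using l0 unfolding l'_def by simp
    ultimately obtain p where "l' = 2^p" using less.IH by blast
    then have "l = 2^Suc p" using le True by simp
    then show ?thesis by blast
  next
    case False
    then have "r = 1" using r2 by simp
    then have "bin_digit_sum l' = 0" using sp less.prems by simp
    then have "l' = 0" by (rule bds_zero_iff)
    then have "l = 2^0" using le \<open>r = 1\<close> by simp
    then show ?thesis by blast
  qed
qed

lemma pow_cong: "[(2::int)^n = 2^(n mod i)] (mod (2^i - 1))"
proof -
  have h: "[(2::int)^i = 1] (mod 2^i - 1)" by (simp add: cong_iff_dvd_diff)
  have e: "(2::int)^n = (2^i)^(n div i) * 2^(n mod i)"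
  proof -
    have "(2::int)^n = 2^(i*(n div i) + n mod i)" by simp
    also have "\<dots> = (2^i)^(n div i) * 2^(n mod i)" by (simp only: power_add power_mult)
    finally show ?thesis .
  qed
  have "[(2^i)^(n div i) * 2^(n mod i) = 1^(n div i) * (2::int)^(n mod i)] (mod 2^i-1)"
    by (intro cong_mult cong_pow h cong_refl)
  then show ?thesis using e by simp
qed

lemma int_k: "i \<ge> 1 \<Longrightarrow> int (2^i - 1) = 2^i - 1"
  by (simp add: of_nat_diff)


lemma upper_witness:
  assumes i2: "i \<ge> 2" and kdef: "k = 2^i - 1" and km: "0 < km" "i dvd (k + km)"
  shows "0 < 2^(k+km) + 2^k - 2^(k-i) - (1::nat) \<and> k dvd (2^(k+km) + 2^k - 2^(k-i) - 1)
       \<and> bin_digit_sum (2^(k+km) + 2^k - 2^(k-i) - 1) = k"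
proof -
  have ilt: "i < 2^i" by (rule less_exp)
  have ki: "i \<le> k" using kdef ilt by linarith
  have k1: "k \<ge> 1" using ki i2 by simp
  have p1: "(2::nat)^(k-i) < 2^k" using ki i2 by (intro power_strict_increasing) auto
  have p2: "(2::nat)^k \<le> 2^(k+km)" by (intro power_increasing) auto
  define low where "low = (2::nat)^k - 1 - 2^(k-i)"
  have bl: "bin_digit_sum low = k - 1" using bds_compl[OF p1] bds_pow2 unfolding low_def by simp
  have lowlt: "low < 2^(k+km)" unfolding low_def using p1 p2 by linarith
  have Ne: "(2::nat)^(k+km) + 2^k - 2^(k-i) - 1 = 1 * 2^(k+km) + low"
    unfolding low_def using p1 by linarith
  have bN: "bin_digit_sum (2^(k+km) + 2^k - 2^(k-i) - 1) = k"
    unfolding Ne bds_shift[OF lowlt] bl using k1 by simp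
  have pos: "0 < (2::nat)^(k+km) + 2^k - 2^(k-i) - 1" unfolding Ne by simp
  have l1: "low + 2^(k-i) + 1 = 2^k" unfolding low_def using p1 by linarith
  have l2: "int low + 2^(k-i) + 1 = 2^k" using arg_cong[OF l1, of int] by simp
  have iN: "int ((2::nat)^(k+km) + 2^k - 2^(k-i) - 1) = 2^(k+km) + 2^k - 2^(k-i) - 1"
    unfolding Ne using l2 by simp
  define M :: int where "M = 2^i - 1"
  have Mk: "int k = M" unfolding M_def kdef using i2 by (simp add: of_nat_diff)
  have c1: "[(2::int)^(k+km) = 1] (mod M)" using pow_cong[of "k+km" i] km(2) unfolding M_def by simp
  have c2: "[(2::int)^k = 2^(k mod i)] (mod M)" using pow_cong[of k i] unfolding M_def by simp
  have mm: "(k - i) mod i = k mod i" using ki by (simp add: le_mod_geq)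
  have c3: "[(2::int)^(k-i) = 2^(k mod i)] (mod M)" using pow_cong[of "k-i" i] mm unfolding M_def by simp
  have "[(2::int)^(k+km) + 2^k - 2^(k-i) - 1 = 1 + 2^(k mod i) - 2^(k mod i) - 1] (mod M)"
    by (intro cong_diff cong_add c1 c2 c3 cong_refl)
  then have "[(2::int)^(k+km) + 2^k - 2^(k-i) - 1 = 0] (mod M)" by simp
  then have "int k dvd int ((2::nat)^(k+km) + 2^k - 2^(k-i) - 1)"
    unfolding iN Mk by (simp add: cong_0_iff)
  then have "k dvd (2::nat)^(k+km) + 2^k - 2^(k-i) - 1" by (simp only: of_nat_dvd_iff)
  then show ?thesis using pos bN by simp
qed


lemma lower_bound:
  assumes i2: "i \<ge> 2" and kdef: "k = 2^i - 1" and k1: "k mod i = 1"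
    and m: "0 < m" "k dvd m" "bin_digit_sum m = k"
  shows "2^(k+i-1) + 2^k - 2^(k-i) - 1 \<le> m"
proof -
  have ilt: "i < 2^i" by (rule less_exp)
  have ki: "i \<le> k" using kdef ilt by linarith
  define M :: int where "M = 2^i - 1"
  have Mk: "int k = M" unfolding M_def kdef using i2 by (simp add: of_nat_diff)
  have mM: "[int m = 0] (mod M)" using m(2) unfolding Mk[symmetric] cong_0_iff by simp
  have kdm: "k = i * (k div i) + 1"
  proof -
    have "k = i * (k div i) + k mod i" by simp
    then show ?thesis using k1 by simp
  qed
  define P :: nat where "P = 2^k"
  define Q :: nat where "Q = 2^(i-1)"
  define R :: nat where "R = 2^(k-i)"
  have Q2: "Q \<ge> 2"
  proof -
    have "(2::nat)^1 \<le> 2^(i-1)" using i2 by (intro power_increasing) auto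
    then show ?thesis unfolding Q_def by simp
  qed
  have RP: "R < P" unfolding R_def P_def using ki i2 by (intro power_strict_increasing) auto
  have ePQ: "(2::nat)^(k+i-1) = Q * P" unfolding Q_def P_def using i2
    by (simp add: power_add[symmetric])
  have ePQ2: "(2::nat)^(k+i) = 2 * (Q * P)" unfolding Q_def P_def using i2
    by (simp add: power_add[symmetric] power_Suc[symmetric])
  have QP: "P \<le> Q * P" using Q2 by simp
  have P0: "P > 0" unfolding P_def by simp
  show ?thesis
  proof (cases "m < 2^(k+i-1)")
    case True
    define n where "n = k+i-1"
    define x where "x = 2^n - 1 - m"
    have mn: "m < 2^n" using True unfolding n_def .
    have bx: "bin_digit_sum x = i - 1" using bds_compl[OF mn] m(3) unfolding x_def n_def by simp
    have x0: "0 < x"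
    proof (rule ccontr)
      assume "\<not> 0 < x" then have "x = 0" by simp
      then show False using bx i2 by simp
    qed
    have xe: "x + m + 1 = 2^n" unfolding x_def using mn by linarith
    have ix: "int x = 2^n - 1 - int m" using arg_cong[OF xe, of int] by simp
    have "n = i * (k div i) + i" using kdm i2 unfolding n_def by linarith
    then have "n = i * (k div i + 1)" by simp
    then have nmod: "n mod i = 0" by simp
    have c: "[(2::int)^n = 1] (mod M)" using pow_cong[of n i] nmod unfolding M_def by simp
    have "[int x = 1 - 1 - 0] (mod M)" unfolding ix by (intro cong_diff c mM cong_refl)
    then have "int k dvd int x" unfolding Mk by (simp add: cong_0_iff)
    then have "(2^i - 1) dvd x" unfolding kdef[symmetric] by (simp only: of_nat_dvd_iff)
    then have "i \<le> bin_digit_sum x" using bds_mult_M[OF x0] i2 by simp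
    then show ?thesis using bx i2 by simp
  next
    case F1: False
    show ?thesis
    proof (cases "m < 2^(k+i)")
      case False
      have "2^(k+i-1) + 2^k - 2^(k-i) - 1 < (2::nat)^(k+i)"
        unfolding ePQ ePQ2 P_def[symmetric] R_def[symmetric] using QP P0 by linarith
      then show ?thesis using False by linarith
    next
      case True
      define x where "x = 2^(k+i) - 1 - m"
      have bx: "bin_digit_sum x = i" using bds_compl[OF True] m(3) unfolding x_def by simp
      have xe: "x + m + 1 = 2^(k+i)" unfolding x_def using True by linarith
      have ix: "int x = 2^(k+i) - 1 - int m" using arg_cong[OF xe, of int] by simp
      have nmod: "(k+i) mod i = 1" using k1 by simp
      have c: "[(2::int)^(k+i) = 2] (mod M)" using pow_cong[of "k+i" i] nmod unfolding M_def by simp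
      have "[int x = 2 - 1 - 0] (mod M)" unfolding ix by (intro cong_diff c mM cong_refl)
      then have cx: "[int x = 1] (mod M)" by simp
      have xlt: "x < Q * P" using xe F1 unfolding ePQ ePQ2 by linarith
      define X where "X = (Q - 1) * P + R"
      have "(Q - 1) * P = Q * P - P" by (simp add: diff_mult_distrib)
      then have QP1: "(Q - 1) * P + P = Q * P" using QP by linarith
      have "x \<le> X"
      proof -
        define h where "h = x div P"
        define l where "l = x mod P"
        have xhl: "x = h * P + l" unfolding h_def l_def by simp
        have lP: "l < P" unfolding l_def P_def by simp
        have hQ: "h < Q" unfolding h_def using xlt by (simp add: less_mult_imp_div_less)
        show ?thesis
        proof (cases "h < Q - 1")
          case True
          then have "h + 1 \<le> Q - 1" by simp
          then have "(h+1) * P \<le> (Q - 1) * P" by (rule mult_right_mono) simp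
          then show ?thesis unfolding X_def xhl using lP by simp
        next
          case False
          then have hq: "h = Q - 1" using hQ by simp
          have bh: "bin_digit_sum h = i - 1" unfolding hq Q_def by (rule bds_mask)
          have "bin_digit_sum x = bin_digit_sum h + bin_digit_sum l"
            unfolding xhl P_def using bds_shift lP[unfolded P_def] by simp
          then have "bin_digit_sum l = 1" using bx bh i2 by simp
          then obtain p where lp: "l = 2^p" using bds_one_pow by blast
          have pk: "p < k" using lP unfolding lp P_def by simp
          have ihl: "int x = int h * 2^k + 2^p" unfolding xhl lp P_def by simp
          have ih: "int h = 2^(i-1) - 1" unfolding hq Q_def using i2 by (simp add: of_nat_diff)
          have c2: "[(2::int)^k = 2] (mod M)" using pow_cong[of k i] k1 unfolding M_def by simp
          have cp: "[(2::int)^p = 2^(p mod i)] (mod M)" using pow_cong[of p i] unfolding M_def by simp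
          have "[int x = (2^(i-1) - 1) * 2 + 2^(p mod i)] (mod M)"
            unfolding ihl ih by (intro cong_add cong_mult c2 cp cong_refl)
          moreover have "(2::int)^(i-1) * 2 = 2^i" using power_Suc2[of "2::int" "i-1"] i2 by simp
          ultimately have "[int x = M - 1 + 2^(p mod i)] (mod M)" unfolding M_def by (simp add: algebra_simps)
          moreover have "[M - 1 + 2^(p mod i) = -1 + 2^(p mod i)] (mod M)"
            by (simp add: cong_iff_dvd_diff)
          ultimately have "[1 = -1 + 2^(p mod i)] (mod M)" using cx by (metis cong_sym cong_trans)
          then have "[1 + 1 = -1 + 2^(p mod i) + 1] (mod M)" by (intro cong_add cong_refl)
          then have cc: "[2 = (2::int)^(p mod i)] (mod M)" by simp
          have pi: "p mod i < i" using i2 by simp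
          have "(2::int)^(p mod i) \<le> 2^(i-1)" using pi by (intro power_increasing) auto
          moreover have q2i: "(2::int) \<le> 2^(i-1)" using power_increasing[of 1 "i-1" "2::int"] i2 by simp
          moreover have "(2::int)^(i-1) < M" unfolding M_def using q2i \<open>(2::int)^(i-1) * 2 = 2^i\<close>
            by linarith
          ultimately have "(2::int)^(p mod i) < M" by linarith
          moreover have "(2::int) < M" unfolding M_def using q2i \<open>(2::int)^(i-1) * 2 = 2^i\<close>
            by linarith
          ultimately have "2 = (2::int)^(p mod i)" using cc by (intro cong_less_imp_eq_int) auto
          then have pm: "p mod i = 1" using power_inject_exp[of "2::int" "p mod i" 1] by simp
          have pdm: "p = i * (p div i) + 1"
          proof -
            have "p = i * (p div i) + p mod i" by simp
            then show ?thesis using pm by simp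
          qed
          have "i * (p div i) < i * (k div i)" using pk pdm kdm by linarith
          then have "p div i < k div i" by simp
          then have "Suc (p div i) \<le> k div i" by simp
          then have "i * Suc (p div i) \<le> i * (k div i)" by (rule mult_le_mono2)
          then have "i * (p div i) + i \<le> i * (k div i)" by simp
          then have "p \<le> k - i" using pdm kdm by linarith
          then have "2^p \<le> R" unfolding R_def by (intro power_increasing) auto
          then show ?thesis unfolding X_def xhl lp hq by simp
        qed
      qed
      moreover have "2^(k+i-1) + 2^k - 2^(k-i) - 1 + X + 1 = (2::nat)^(k+i)"
        unfolding ePQ ePQ2 P_def[symmetric] R_def[symmetric] X_def using QP1 RP QP by linarith
      ultimately show ?thesis using xe by linarith
    qed
  qed
qed


lemma int_pow_m1: "i \<ge> 1 \<Longrightarrow> int (2^i - 1) = 2^i - 1"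
  by (simp add: of_nat_diff)

lemma prime_exp:
  assumes p: "prime (2^i - 1 :: nat)" and i2: "i \<ge> 2"
  shows "prime i"
  unfolding prime_nat_iff
proof (intro conjI allI impI)
  show "1 < i" using i2 by simp
next
  fix a assume ad: "a dvd i"
  have a0: "a \<ge> 1" using ad i2 by (cases a) auto
  have "i mod a = 0" using ad by simp
  then have "[(2::int)^i = 1] (mod (2^a - 1))" using pow_cong[of i a] by simp
  then have "(2::int)^a - 1 dvd 2^i - 1" by (simp add: cong_iff_dvd_diff)
  then have "int (2^a - 1) dvd int (2^i - 1)" using int_pow_m1[OF a0] int_pow_m1[of i] i2 by simp
  then have "(2^a - 1::nat) dvd (2^i - 1)" by (simp only: of_nat_dvd_iff)
  then have "2^a - 1 = (1::nat) \<or> 2^a - 1 = (2^i - 1::nat)" using p unfolding prime_nat_iff by blast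
  then show "a = 1 \<or> a = i"
  proof
    assume "2^a - 1 = (1::nat)"
    then have "(2::nat)^a = 2^1" by simp
    then show ?thesis using power_inject_exp[of "2::nat" a 1] by simp
  next
    assume "2^a - 1 = (2^i - 1::nat)"
    then have "(2::nat)^a = 2^i" using one_le_power[of "2::nat" a] one_le_power[of "2::nat" i] by linarith
    then show ?thesis using power_inject_exp[of "2::nat" a i] by simp
  qed
qed

lemma kmod1:
  assumes p: "prime (2^i - 1 :: nat)" and i2: "i \<ge> 2"
  shows "(2^i - 1) mod i = (1::nat)"
proof (cases "i = 2")
  case True then show ?thesis by simp
next
  case False
  then have i3: "i > 2" using i2 by simp
  have pi: "prime i" using prime_exp[OF p i2] .
  have nd: "\<not> i dvd 2" using i3 by (auto dest: dvd_imp_le)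
  have f: "[2^(i-1) = 1] (mod i)" using fermat_theorem[OF pi nd] .
  have "[2 * 2^(i-1) = 2 * 1] (mod i)" by (intro cong_mult cong_refl f)
  moreover have "2 * 2^(i-1) = (2::nat)^i" using power_Suc[of "2::nat" "i-1"] i2 by simp
  ultimately have "[2^i = 2] (mod i)" by simp
  then have "(2::nat)^i mod i = 2" unfolding cong_def using i3 by simp
  then obtain q where q: "(2::nat)^i = i * q + 2" by (metis div_mult_mod_eq mult.commute)
  then have "(2::nat)^i - 1 = 1 + i * q" by simp
  moreover have "(1 + i * q) mod i = 1" using i3 by (simp only: mod_mult_self2) simp
  ultimately show ?thesis by simp
qed

lemma kminus_prop:
  assumes "i \<ge> 2"
  shows "0 < kminus i k \<and> i dvd (k + kminus i k)"
proof -
  define w where "w = i - k mod i"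
  have km: "k mod i < i" using assms by simp
  have w0: "0 < w" unfolding w_def using km by simp
  have e: "k = i * (k div i) + k mod i" by simp
  have "w + k = i + i * (k div i)" unfolding w_def using km e by linarith
  then have "w + k = i * (k div i + 1)" by simp
  then have "int w + int k = int i * (int (k div i) + 1)" by (metis of_nat_add of_nat_mult of_nat_1)
  then have "[int w = - int k] (mod int i)" unfolding cong_iff_dvd_diff by simp
  then have ex: "\<exists>m. 0 < m \<and> [int m = - int k] (mod int i)" using w0 by blast
  have "0 < kminus i k \<and> [int (kminus i k) = - int k] (mod int i)"
    unfolding kminus_def by (rule LeastI_ex[OF ex])
  then have "0 < kminus i k" "int i dvd int (kminus i k) + int k" unfolding cong_iff_dvd_diff by auto
  then show ?thesis by (metis of_nat_add of_nat_dvd_iff add.commute)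
qed

lemma kminus_le:
  assumes i2: "i \<ge> 2" and k1: "k mod i = 1"
  shows "kminus i k \<le> i - 1"
proof -
  have "k = i * (k div i) + k mod i" by simp
  then have "(i - 1) + k = i * (k div i + 1)" using k1 i2 by simp
  then have "int (i - 1) + int k = int i * (int (k div i) + 1)" by (metis of_nat_add of_nat_mult of_nat_1)
  then have "[int (i-1) = - int k] (mod int i)" unfolding cong_iff_dvd_diff by simp
  moreover have "0 < i - 1" using i2 by simp
  ultimately show ?thesis unfolding kminus_def by (intro Least_le) simp
qed

lemma part1:
  assumes i2: "i \<ge> 2"
  defines "k \<equiv> 2^i - 1"
  shows "a_seq k \<le> 2 ^ (k + kminus i k) + 2 ^ k - 2 ^ (k - i) - 1 \<and>
         (prime k \<longrightarrow> a_seq k = 2 ^ (k + i - 1) + 2 ^ k - 2 ^ (k - i) - 1)"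
proof -
  have kp: "0 < kminus i k \<and> i dvd (k + kminus i k)" by (rule kminus_prop[OF i2])
  have W: "0 < 2^(k+kminus i k) + 2^k - 2^(k-i) - (1::nat) \<and> k dvd (2^(k+kminus i k) + 2^k - 2^(k-i) - 1)
       \<and> bin_digit_sum (2^(k+kminus i k) + 2^k - 2^(k-i) - 1) = k"
    using upper_witness[OF i2 k_def[THEN meta_eq_to_obj_eq]] kp by blast
  have up: "a_seq k \<le> 2 ^ (k + kminus i k) + 2 ^ k - 2 ^ (k - i) - 1"
    unfolding a_seq_def by (rule Least_le) (use W in blast)
  have P: "0 < a_seq k \<and> k dvd a_seq k \<and> bin_digit_sum (a_seq k) = k"
    unfolding a_seq_def by (rule LeastI) (use W in blast)
  have "prime k \<longrightarrow> a_seq k = 2 ^ (k + i - 1) + 2 ^ k - 2 ^ (k - i) - 1"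
  proof
    assume pk: "prime k"
    have k1: "k mod i = 1" using kmod1 pk i2 unfolding k_def by blast
    have kl: "kminus i k \<le> i - 1" by (rule kminus_le[OF i2 k1])
    have "(2::nat) ^ (k + kminus i k) \<le> 2 ^ (k + i - 1)" using kl i2 by (intro power_increasing) auto
    then have "2 ^ (k + kminus i k) + 2 ^ k - 2 ^ (k - i) - 1 \<le> (2::nat) ^ (k + i - 1) + 2 ^ k - 2 ^ (k - i) - 1"
      by (intro diff_le_mono add_right_mono)
    then have "a_seq k \<le> 2 ^ (k + i - 1) + 2 ^ k - 2 ^ (k - i) - 1" using up by linarith
    moreover have "2 ^ (k + i - 1) + 2 ^ k - 2 ^ (k - i) - 1 \<le> a_seq k"
      using lower_bound[OF i2 k_def[THEN meta_eq_to_obj_eq] k1] P by blast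
    ultimately show "a_seq k = 2 ^ (k + i - 1) + 2 ^ k - 2 ^ (k - i) - 1" by linarith
  qed
  then show ?thesis using up by blast
qed

lemma ratio:
  assumes i2: "i \<ge> 2" and kdef: "k = 2^i - 1" and pk: "prime k"
  shows "c_seq k / 2^k = 1/2 + (3/2 - inverse (real k + 1) - inverse (2^k)) * inverse (real k)"
proof -
  have a: "a_seq k = 2 ^ (k + i - 1) + 2 ^ k - 2 ^ (k - i) - 1" using part1[OF i2] pk kdef by simp
  have ilt: "i < 2^i" by (rule less_exp)
  have ki: "i \<le> k" using kdef ilt by linarith
  have p1: "(2::nat)^(k-i) < 2^k" using ki i2 by (intro power_strict_increasing) auto
  have ne: "a_seq k + 2^(k-i) + 1 = 2 ^ (k + i - 1) + 2 ^ k" unfolding a using p1 by linarith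
  have re: "real (a_seq k) + 2^(k-i) + 1 = 2 ^ (k + i - 1) + 2 ^ k"
    using arg_cong[OF ne, of real] by simp
  define E :: real where "E = 2^k"
  define T :: real where "T = 2^i"
  have E0: "E > 0" unfolding E_def by simp
  have T: "T = real k + 1" unfolding T_def kdef using one_le_power[of "2::nat" i]
    by (simp add: of_nat_diff)
  have e1: "(2::real)^(k+i-1) * 2 = E * T" unfolding E_def T_def using i2
    using power_Suc2[of "2::real" "k+i-1"] by (simp add: power_add[symmetric])
  have e2: "(2::real)^(k-i) * T = E" unfolding E_def T_def using ki by (simp add: power_add[symmetric])
  have k0: "real k > 0" using ki i2 by simp
  have T0: "T > 0" using T k0 by simp
  have ra: "real (a_seq k) = E * T / 2 + E - E / T - 1"
  proof -
    have "(2::real)^(k+i-1) = E * T / 2" using e1 by simp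
    moreover have "(2::real)^(k-i) = E / T" using e2 T0 by (simp add: field_simps)
    ultimately show ?thesis using re unfolding E_def[symmetric] by simp
  qed
  have "c_seq k / 2^k = real (a_seq k) / (real k * E)" unfolding c_seq_def E_def by simp
  also have "\<dots> = 1/2 + (3/2 - inverse T - inverse E) * inverse (real k)"
  proof -
    have d: "real k * E \<noteq> 0" using E0 k0 by simp
    define B where "B = 3/2 - inverse T - inverse E"
    have s1: "(1/2 + B * inverse (real k)) * (real k * E) = real k * E / 2 + B * E"
      using k0 by (simp add: field_simps)
    have ie: "inverse E * E = 1" using E0 by simp
    have it: "inverse T * E = E / T" by (simp add: divide_inverse mult.commute)
    have s2: "B * E = 3/2*E - E/T - 1" unfolding B_def left_diff_distrib ie it by simp
    have s3: "E * T / 2 + E - E / T - 1 = real k * E/2 + 3/2*E - E/T - 1" unfolding T by (simp add: field_simps)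
    have X: "(E * T / 2 + E - E / T - 1) = (1/2 + (3/2 - inverse T - inverse E) * inverse (real k)) * (real k * E)"
      unfolding B_def[symmetric] s1 s2 s3 by linarith
    show ?thesis unfolding ra X using d by simp
  qed
  finally show ?thesis unfolding T E_def .
qed

theorem mainTheorem7:
  shows "(\<forall>i::nat. i \<ge> 2 \<longrightarrow>
            (let k = 2 ^ i - 1 in
               a_seq k \<le> 2 ^ (k + kminus i k) + 2 ^ k - 2 ^ (k - i) - 1 \<and>
               (prime k \<longrightarrow> a_seq k = 2 ^ (k + i - 1) + 2 ^ k - 2 ^ (k - i) - 1)))
       \<and> (infinite mersenne_primes \<longrightarrow>
            ((\<lambda>k. c_seq k / 2 ^ k) \<longlongrightarrow> 1 / 2) (inf at_top (principal mersenne_primes)))"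
proof (intro conjI allI impI)
  fix i :: nat assume "i \<ge> 2"
  then show "let k = 2 ^ i - 1 in
               a_seq k \<le> 2 ^ (k + kminus i k) + 2 ^ k - 2 ^ (k - i) - 1 \<and>
               (prime k \<longrightarrow> a_seq k = 2 ^ (k + i - 1) + 2 ^ k - 2 ^ (k - i) - 1)"
    unfolding Let_def by (rule part1)
next
  define g where "g = (\<lambda>k::nat. 1/2 + (3/2 - inverse (real k + 1) - inverse ((2::real)^k)) * inverse (real k))"
  have l1: "(\<lambda>k::nat. inverse (real k + 1)) \<longlonglongrightarrow> 0"
    using LIMSEQ_inverse_real_of_nat by (simp add: add.commute)
  have l2: "(\<lambda>k::nat. inverse ((2::real)^k)) \<longlonglongrightarrow> 0" by (rule LIMSEQ_inverse_realpow_zero) simp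
  have "g \<longlonglongrightarrow> 1/2 + (3/2 - 0 - 0) * 0"
    unfolding g_def by (intro tendsto_intros l1 l2 lim_inverse_n)
  then have gl: "(g \<longlongrightarrow> 1/2) at_top" by simp
  have gl2: "(g \<longlongrightarrow> 1/2) (inf at_top (principal mersenne_primes))"
    by (rule tendsto_mono[OF inf_le1 gl])
  have ev: "eventually (\<lambda>k. c_seq k / 2 ^ k = g k) (inf at_top (principal mersenne_primes))"
    unfolding eventually_inf_principal
  proof (rule always_eventually, intro allI impI)
    fix k assume "k \<in> mersenne_primes"
    then obtain i where "prime k" "i \<ge> 2" "k = 2^i - 1" unfolding mersenne_primes_def by blast
    then show "c_seq k / 2 ^ k = g k" unfolding g_def using ratio by blast
  qed
  show "((\<lambda>k. c_seq k / 2 ^ k) \<longlongrightarrow> 1 / 2) (inf at_top (principal mersenne_primes))"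
    using tendsto_cong[OF ev] gl2 by simp
qed


end
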